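(* Let $P$ be a natural unit interval order on $[n]$ with Catalan path $C$, and let $\widetilde{C}$ be the reflection of $C$ about the line $y=n-x$ (which is again a Catalan path from $(0,0)$ to $(n,n)$). Let $\widetilde{P}$ be the natural unit interval order whose Catalan path is $\widetilde{C}$, and let $G=\mathrm{inc}(P)$, $\widetilde{G}=\mathrm{inc}(\widetilde{P})$. Then $X_G(\mathbf{x},t)=X_{\widetilde{G}}(\mathbf{x},t)$.
   Context: A natural unit interval order $P(m_1,\dots,m_{n-1})$ is defined for integers $m_1\le m_2\le\cdots\le m_{n-1}\le n$ with $m_i\ge i$ for all $i$: it is the poset on $[n]$ with $i<_P j$ iff $i<n$ and $j\in\{m_i+1,\dots,n\}$. Its incomparability graph $\mathrm{inc}(P)$ has vertex set $[n]$ and an edge $\{i,j\}$ ($i<j$) iff $j\le m_i$. The Catalan path of $P$ is the lattice path from $(0,0)$ to $(n,n)$ with unit north and east steps whose $i$-th east step lies on the line $y=m_i$ for $i=1,\dots,n-1$ and whose last east step lies on $y=n$; this gives a bijection between natural unit interval orders on $[n]$ and lattice paths from $(0,0)$ to $(n,n)$ staying weakly above $y=x$. For a graph $G$ with vertex set $V\subset\mathbb{P}$, the chromatic quasisymmetric function is $X_G(\mathbf{x},t)=\sum_\kappa t^{\mathrm{asc}(\kappa)}\mathbf{x}_\kappa$, summed over proper colorings $\kappa:V\to\mathbb{P}$, where $\mathbf{x}_\kappa=\prod_{v\in V}x_{\kappa(v)}$ and $\mathrm{asc}(\kappa)$ is the number of edges $\{i,j\}$ with $i<j$ and $\kappa(i)<\kappa(j)$.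 *)

theory Defs
  imports "HOL-Computational_Algebra.Polynomial"
begin

text \<open>A natural unit interval order P(m_1,...,m_{n-1}) on [n] = {1..n} is encoded by the
function m :: nat => nat, of which only the values m 1, ..., m (n-1) matter.\<close>

definition nuio :: "nat \<Rightarrow> (nat \<Rightarrow> nat) \<Rightarrow> bool" where
  "nuio n m \<longleftrightarrow>
     (\<forall>i. 1 \<le> i \<and> i < n \<longrightarrow> i \<le> m i \<and> m i \<le> n) \<and>
     (\<forall>i j. 1 \<le> i \<and> i \<le> j \<and> j < n \<longrightarrow> m i \<le> m j)"

definition nuio_less :: "nat \<Rightarrow> (nat \<Rightarrow> nat) \<Rightarrow> nat \<Rightarrow> nat \<Rightarrow> bool" where
  "nuio_less n m i j \<longleftrightarrow> 1 \<le> i \<and> i < n \<and> m i < j \<and> j \<le> n"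

definition inc_vertices :: "nat \<Rightarrow> nat set" where
  "inc_vertices n = {1..n}"

definition inc_edges :: "nat \<Rightarrow> (nat \<Rightarrow> nat) \<Rightarrow> nat set set" where
  "inc_edges n m = {{i, j} | i j. 1 \<le> i \<and> i < j \<and> j \<le> n \<and> j \<le> m i}"

text \<open>Lattice paths from (0,0) to (n,n) are lists of unit steps: True = north step,
False = east step. With the conventions m_0 = 0 and m_n = n, the Catalan path of P is
N^(m_1) E N^(m_2 - m_1) E ... N^(m_n - m_(n-1)) E, i.e. the i-th east step lies on y = m_i.\<close>

definition mext :: "nat \<Rightarrow> (nat \<Rightarrow> nat) \<Rightarrow> nat \<Rightarrow> nat" where
  "mext n m i = (if i = 0 then 0 else if i < n then m i else n)"

definition catalan_path :: "nat \<Rightarrow> (nat \<Rightarrow> nat) \<Rightarrow> bool list" where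
  "catalan_path n m =
     concat (map (\<lambda>i. replicate (mext n m i - mext n m (i - 1)) True @ [False]) [1..<n+1])"

text \<open>Reflection about the line y = n - x: the point (x,y) goes to (n-y, n-x); the path is
traversed backwards and north/east steps are exchanged.\<close>
definition reflect_path :: "bool list \<Rightarrow> bool list" where
  "reflect_path C = rev (map Not C)"

text \<open>Colorings are functions kappa : V -> positive integers, represented as functions
nat => nat that vanish outside V.\<close>

definition proper_coloring :: "nat set \<Rightarrow> nat set set \<Rightarrow> (nat \<Rightarrow> nat) \<Rightarrow> bool" where
  "proper_coloring V E \<kappa> \<longleftrightarrow>
     (\<forall>v\<in>V. 1 \<le> \<kappa> v) \<and> (\<forall>v. v \<notin> V \<longrightarrow> \<kappa> v = 0) \<and>
     (\<forall>e\<in>E. \<forall>i\<in>e. \<forall>j\<in>e. i \<noteq> j \<longrightarrow> \<kappa> i \<noteq> \<kappa> j)"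

definition asc :: "nat set set \<Rightarrow> (nat \<Rightarrow> nat) \<Rightarrow> nat" where
  "asc E \<kappa> = card {e\<in>E. \<exists>i j. e = {i, j} \<and> i < j \<and> \<kappa> i < \<kappa> j}"

text \<open>The monomial x_kappa = prod_v x_(kappa v) is x^alpha where alpha c = number of vertices
of color c. X_G(x,t) is represented by its coefficient map: the coefficient of x^alpha is
the polynomial in t given by the sum of t^asc(kappa) over proper colorings with x_kappa = x^alpha.\<close>

definition chrom_qsym :: "nat set \<Rightarrow> nat set set \<Rightarrow> (nat \<Rightarrow> nat) \<Rightarrow> int poly" where
  "chrom_qsym V E \<alpha> =
     (\<Sum>\<kappa> \<in> {\<kappa>. proper_coloring V E \<kappa> \<and> (\<forall>c. card {v\<in>V. \<kappa> v = c} = \<alpha> c)}.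
        monom 1 (asc E \<kappa>))"

end

theory Submission
  imports Defs
begin


definition cT :: "bool list \<Rightarrow> nat" where "cT xs = length (filter id xs)"
definition cF :: "bool list \<Rightarrow> nat" where "cF xs = length (filter Not xs)"
definition Qp :: "bool list \<Rightarrow> nat \<Rightarrow> nat \<Rightarrow> bool" where
  "Qp C a b \<longleftrightarrow> (\<exists>k\<le>length C. b \<le> cT (take k C) \<and> cF (take k C) < a)"

definition blk :: "nat \<Rightarrow> (nat \<Rightarrow> nat) \<Rightarrow> nat \<Rightarrow> bool list" where
  "blk n m i = replicate (mext n m i - mext n m (i - 1)) True @ [False]"

lemma cT_append[simp]: "cT (xs @ ys) = cT xs + cT ys" by (simp add: cT_def)
lemma cF_append[simp]: "cF (xs @ ys) = cF xs + cF ys" by (simp add: cF_def)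
lemma cT_Cons[simp]: "cT (x # ys) = (if x then 1 else 0) + cT ys" by (simp add: cT_def)
lemma cF_Cons[simp]: "cF (x # ys) = (if x then 0 else 1) + cF ys" by (simp add: cF_def)
lemma cT_Nil[simp]: "cT [] = 0" by (simp add: cT_def)
lemma cF_Nil[simp]: "cF [] = 0" by (simp add: cF_def)
lemma cT_rep[simp]: "cT (replicate d True) = d" by (simp add: cT_def)
lemma cF_rep[simp]: "cF (replicate d True) = 0" by (simp add: cF_def)

lemma mext_mono:
  assumes "nuio n m" "1 \<le> i" "i \<le> n"
  shows "mext n m (i - 1) \<le> mext n m i"
proof -
  consider "i = 1" | "1 < i" "i < n" | "1 < i" "i = n" using assms by linarith
  then show ?thesis
  proof cases
    case 1 then show ?thesis by (simp add: mext_def)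
  next
    case 2
    then have "m (i - 1) \<le> m i" using assms(1) unfolding nuio_def by auto
    then show ?thesis using 2 by (simp add: mext_def less_imp_diff_less)
  next
    case 3
    then have "m (i - 1) \<le> n" using assms(1) unfolding nuio_def by auto
    then show ?thesis using 3 by (simp add: mext_def)
  qed
qed

lemma tele:
  assumes "nuio n m" "a \<le> n"
  shows "cT (concat (map (blk n m) [1..<a+1])) = mext n m a \<and> cF (concat (map (blk n m) [1..<a+1])) = a"
  using assms(2)
proof (induction a)
  case 0 then show ?case by (simp add: mext_def)
next
  case (Suc a)
  have "[1..<Suc a + 1] = [1..<a+1] @ [Suc a]" by simp
  moreover have "mext n m a \<le> mext n m (Suc a)" using mext_mono[OF assms(1), of "Suc a"] Suc.prems by simp
  ultimately show ?case using Suc by (simp add: blk_def)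
qed

lemma cp_eq: "catalan_path n m = concat (map (blk n m) [1..<n+1])"
  unfolding catalan_path_def blk_def by simp

lemma cT_take_le: "cT (take k xs) \<le> cT xs"
  by (metis append_take_drop_id cT_append le_add1)

lemma CP:
  assumes "nuio n m" "1 \<le> a" "a \<le> n"
  shows "Qp (catalan_path n m) a b \<longleftrightarrow> b \<le> mext n m a"
proof -
  define X where "X = concat (map (blk n m) [1..<a])"
  define Y where "Y = concat (map (blk n m) [a+1..<n+1])"
  define d where "d = mext n m a - mext n m (a - 1)"
  define A where "A = X @ replicate d True"
  have "[1..<n+1] = [1..<a] @ a # [a+1..<n+1]"
  proof -
    have "[1..<n+1] = [1..<a] @ [a..<n+1]" using assms upt_add_eq_append[of 1 a "n+1-a"] by simp
    moreover have "[a..<n+1] = a # [a+1..<n+1]" using assms upt_conv_Cons[of a "n+1"] by simp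
    ultimately show ?thesis by simp
  qed
  then have C: "catalan_path n m = A @ False # Y"
    by (simp add: cp_eq A_def X_def Y_def blk_def d_def)
  have "[1..<a] = [1..<(a-1)+1]" using assms by simp
  then have X: "cT X = mext n m (a-1)" "cF X = a - 1"
    using tele[OF assms(1), of "a-1"] assms by (auto simp: X_def)
  have mm: "mext n m (a-1) \<le> mext n m a" using mext_mono assms by blast
  have A: "cT A = mext n m a" "cF A = a - 1" using X mm by (auto simp: A_def d_def)
  show ?thesis
  proof
    assume "Qp (catalan_path n m) a b"
    then obtain k where k: "b \<le> cT (take k (A @ False # Y))" "cF (take k (A @ False # Y)) < a"
      unfolding Qp_def C by blast
    show "b \<le> mext n m a"
    proof (cases "k \<le> length A")
      case True
      then have "take k (A @ False # Y) = take k A" by simp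
      then show ?thesis using k cT_take_le[of k A] A by simp
    next
      case False
      then obtain j where "k = length A + Suc j" by (metis add_Suc_right less_imp_Suc_add not_le)
      then have "take k (A @ False # Y) = A @ False # take j Y"
        by simp
      then show ?thesis using k A assms by simp
    qed
  next
    assume "b \<le> mext n m a"
    then show "Qp (catalan_path n m) a b" unfolding Qp_def C
      using A assms by (intro exI[of _ "length A"]) auto
  qed
qed


lemma cTF_len: "cT xs + cF xs = length xs"
  by (induction xs) auto

lemma cT_rn: "cT (rev (map Not ys)) = cF ys"
  by (induction ys) auto
lemma cF_rn: "cF (rev (map Not ys)) = cT ys"
  by (induction ys) auto

lemma cT_drop: "cT (drop j C) = cT C - cT (take j C)"
  by (metis append_take_drop_id cT_append diff_add_inverse)
lemma cF_drop: "cF (drop j C) = cF C - cF (take j C)"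
  by (metis append_take_drop_id cF_append diff_add_inverse)
lemma cF_take_le: "cF (take k xs) \<le> cF xs"
  by (metis append_take_drop_id cF_append le_add1)

lemma RP:
  assumes "cT C = n" "cF C = n" "1 \<le> a" "1 \<le> b" "b \<le> n"
  shows "Qp (reflect_path C) a b \<longleftrightarrow> Qp C (n+1-b) (n+1-a)"
proof -
  define L where "L = length C"
  have L: "L = n + n" using cTF_len[of C] assms by (simp add: L_def)
  have tk: "take k (reflect_path C) = rev (map Not (drop (L - k) C))" if "k \<le> L" for k
    using that by (simp add: reflect_path_def take_rev L_def drop_map)
  have lenR: "length (reflect_path C) = L" by (simp add: reflect_path_def L_def)
  show ?thesis
  proof
    assume "Qp (reflect_path C) a b"
    then obtain k where k: "k \<le> L" "b \<le> cT (take k (reflect_path C))" "cF (take k (reflect_path C)) < a"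
      unfolding Qp_def lenR by blast
    define j where "j = L - k"
    have 1: "b \<le> n - cF (take j C)" using k(2) unfolding tk[OF k(1)] cT_rn cF_drop j_def assms by simp
    have 2: "n - cT (take j C) < a" using k(3) unfolding tk[OF k(1)] cF_rn cT_drop j_def assms by simp
    have "cF (take j C) \<le> n" using cF_take_le[of j C] assms by simp
    then show "Qp C (n+1-b) (n+1-a)" unfolding Qp_def
      using 1 2 assms by (intro exI[of _ j]) (auto simp: j_def L_def)
  next
    assume "Qp C (n+1-b) (n+1-a)"
    then obtain j where j: "j \<le> L" "n+1-a \<le> cT (take j C)" "cF (take j C) < n+1-b"
      unfolding Qp_def L_def by blast
    define k where "k = L - j"
    have jk: "L - k = j" "k \<le> L" using j by (auto simp: k_def)
    have "cT (take j C) \<le> n" using cT_take_le[of j C] assms by simp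
    then show "Qp (reflect_path C) a b" unfolding Qp_def lenR
      using j assms jk by (intro exI[of _ k]) (auto simp: tk[OF jk(2)] jk(1) cT_rn cF_rn cT_drop cF_drop)
  qed
qed

lemma cp_counts:
  assumes "nuio n m"
  shows "cT (catalan_path n m) = n" "cF (catalan_path n m) = n"
proof -
  have "mext n m n = n" by (simp add: mext_def)
  then show "cT (catalan_path n m) = n" "cF (catalan_path n m) = n"
    using tele[OF assms, of n] by (auto simp: cp_eq)
qed

lemma Mrefl:
  assumes "nuio n m" "nuio n m'" "catalan_path n m' = reflect_path (catalan_path n m)"
    and "1 \<le> a" "a < b" "b \<le> n"
  shows "b \<le> m' a \<longleftrightarrow> n+1-a \<le> m (n+1-b)"
proof -
  have "b \<le> m' a \<longleftrightarrow> b \<le> mext n m' a" using assms by (simp add: mext_def)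
  also have "\<dots> \<longleftrightarrow> Qp (catalan_path n m') a b" using CP[OF assms(2), of a b] assms by simp
  also have "\<dots> \<longleftrightarrow> Qp (catalan_path n m) (n+1-b) (n+1-a)"
    unfolding assms(3) using RP[OF cp_counts[OF assms(1)]] assms by simp
  also have "\<dots> \<longleftrightarrow> n+1-a \<le> mext n m (n+1-b)" using CP[OF assms(1)] assms by simp
  also have "\<dots> \<longleftrightarrow> n+1-a \<le> m (n+1-b)" using assms by (simp add: mext_def)
  finally show ?thesis .
qed



definition A :: "nat \<Rightarrow> (nat \<Rightarrow> nat) \<Rightarrow> nat \<Rightarrow> nat \<Rightarrow> bool" where
  "A n m u w \<longleftrightarrow> 1 \<le> u \<and> u < w \<and> w \<le> n \<and> w \<le> m u"

lemma edge_form: "e \<in> inc_edges n m \<Longrightarrow> \<exists>i j. e = {i,j} \<and> A n m i j"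
  unfolding inc_edges_def A_def by blast

lemma edge_iff: "{u,w} \<in> inc_edges n m \<longleftrightarrow> A n m u w \<or> A n m w u"
  unfolding inc_edges_def A_def by (auto simp: doubleton_eq_iff)

lemma A_edge: "A n m u w \<Longrightarrow> {u,w} \<in> inc_edges n m"
  using edge_iff by blast

lemma finite_E: "finite (inc_edges n m)"
proof -
  have "inc_edges n m \<subseteq> Pow {1..n}" unfolding inc_edges_def by auto
  then show ?thesis by (rule finite_subset) simp
qed

definition Kset :: "nat set \<Rightarrow> nat set set \<Rightarrow> (nat \<Rightarrow> nat) \<Rightarrow> (nat \<Rightarrow> nat) set" where
  "Kset V E \<alpha> = {\<kappa>. proper_coloring V E \<kappa> \<and> (\<forall>c. card {v\<in>V. \<kappa> v = c} = \<alpha> c)}"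

lemma chrom_K: "chrom_qsym V E \<alpha> = (\<Sum>\<kappa>\<in>Kset V E \<alpha>. monom 1 (asc E \<kappa>))"
  unfolding chrom_qsym_def Kset_def by simp

definition ascP :: "(nat \<Rightarrow> nat) \<Rightarrow> nat set \<Rightarrow> bool" where
  "ascP \<kappa> e \<longleftrightarrow> (\<exists>i j. e = {i, j} \<and> i < j \<and> \<kappa> i < \<kappa> j)"
definition desP :: "(nat \<Rightarrow> nat) \<Rightarrow> nat set \<Rightarrow> bool" where
  "desP \<kappa> e \<longleftrightarrow> (\<exists>i j. e = {i, j} \<and> i < j \<and> \<kappa> j < \<kappa> i)"

lemma asc_P: "asc E \<kappa> = card {e\<in>E. ascP \<kappa> e}"
  unfolding asc_def ascP_def by simp

lemma ascP_dbl: "x < y \<Longrightarrow> ascP \<kappa> {x,y} \<longleftrightarrow> \<kappa> x < \<kappa> y"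
  unfolding ascP_def by (auto simp: doubleton_eq_iff)
lemma desP_dbl: "x < y \<Longrightarrow> desP \<kappa> {x,y} \<longleftrightarrow> \<kappa> y < \<kappa> x"
  unfolding desP_def by (auto simp: doubleton_eq_iff)

lemma proper_A: "proper_coloring V (inc_edges n m) \<kappa> \<Longrightarrow> A n m u w \<Longrightarrow> \<kappa> u \<noteq> \<kappa> w"
  unfolding proper_coloring_def using A_edge[of n m u w] A_def by fastforce

lemma des_count:
  assumes "proper_coloring V (inc_edges n m) \<kappa>"
  shows "card {e\<in>inc_edges n m. desP \<kappa> e} = card (inc_edges n m) - asc (inc_edges n m) \<kappa>"
proof -
  have "{e\<in>inc_edges n m. desP \<kappa> e} = inc_edges n m - {e\<in>inc_edges n m. ascP \<kappa> e}"
  proof (intro set_eqI iffI)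
    fix e assume "e \<in> {e\<in>inc_edges n m. desP \<kappa> e}"
    then obtain i j where "e = {i,j}" "A n m i j" "desP \<kappa> e" using edge_form by blast
    then show "e \<in> inc_edges n m - {e\<in>inc_edges n m. ascP \<kappa> e}"
      using ascP_dbl desP_dbl A_def A_edge by (metis (mono_tags, lifting) DiffI mem_Collect_eq not_less_iff_gr_or_eq)
  next
    fix e assume "e \<in> inc_edges n m - {e\<in>inc_edges n m. ascP \<kappa> e}"
    then obtain i j where "e = {i,j}" "A n m i j" "\<not> ascP \<kappa> e" "e \<in> inc_edges n m" using edge_form by blast
    moreover have "\<kappa> i \<noteq> \<kappa> j" using proper_A[OF assms] \<open>A n m i j\<close> by blast
    ultimately show "e \<in> {e\<in>inc_edges n m. desP \<kappa> e}"
      using ascP_dbl desP_dbl A_def by auto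
  qed
  then show ?thesis using finite_E by (simp add: card_Diff_subset asc_P)
qed


definition rv :: "nat \<Rightarrow> nat \<Rightarrow> nat" where
  "rv n v = (if 1 \<le> v \<and> v \<le> n then n + 1 - v else v)"

lemma rv_rv[simp]: "rv n (rv n v) = v" unfolding rv_def by auto
lemma rv_in: "rv n v \<in> {1..n} \<longleftrightarrow> v \<in> {1..n}" unfolding rv_def by auto
lemma inj_rv: "inj (rv n)" by (metis injI rv_rv)
lemma rv_val: "1 \<le> v \<Longrightarrow> v \<le> n \<Longrightarrow> rv n v = n + 1 - v" unfolding rv_def by auto
lemma rv_val2: "1 \<le> v \<Longrightarrow> v \<le> n \<Longrightarrow> rv n (n + 1 - v) = v" unfolding rv_def by auto
lemma rv_out: "v \<notin> {1..n} \<Longrightarrow> rv n v = v" unfolding rv_def by auto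

lemma E'_eq:
  assumes "nuio n m" "nuio n m'" "catalan_path n m' = reflect_path (catalan_path n m)"
  shows "inc_edges n m' = (\<lambda>e. rv n ` e) ` inc_edges n m"
proof (intro set_eqI iffI)
  fix e assume "e \<in> inc_edges n m'"
  then obtain i j where e: "e = {i,j}" "A n m' i j" using edge_form by blast
  then have "n+1-i \<le> m (n+1-j)" using Mrefl[OF assms, of i j] unfolding A_def by auto
  then have "A n m (n+1-j) (n+1-i)" using e unfolding A_def by auto
  moreover have "rv n ` {n+1-j, n+1-i} = e" using e rv_val2[of i n] rv_val2[of j n] unfolding A_def by auto
  ultimately show "e \<in> (\<lambda>e. rv n ` e) ` inc_edges n m" using A_edge by blast
next
  fix e assume "e \<in> (\<lambda>e. rv n ` e) ` inc_edges n m"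
  then obtain i j where e: "e = rv n ` {i,j}" "A n m i j" using edge_form by blast
  have "n+1-i \<le> m' (n+1-j)"
    using Mrefl[OF assms, of "n+1-j" "n+1-i"] e(2) unfolding A_def by auto
  then have "A n m' (n+1-j) (n+1-i)" using e unfolding A_def by auto
  moreover have "e = {n+1-j, n+1-i}" using e rv_val[of i n] rv_val[of j n] unfolding A_def by auto
  ultimately show "e \<in> inc_edges n m'" using A_edge by blast
qed

lemma content_rv:
  "card {v\<in>{1..n}. \<kappa> (rv n v) = c} = card {v\<in>{1..n}. \<kappa> v = c}"
proof -
  have "{v\<in>{1..n}. \<kappa> (rv n v) = c} = rv n ` {v\<in>{1..n}. \<kappa> v = c}"
  proof (intro set_eqI iffI)
    fix x assume that: "x \<in> {v\<in>{1..n}. \<kappa> (rv n v) = c}"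
    show "x \<in> rv n ` {v\<in>{1..n}. \<kappa> v = c}"
    proof -
      have "rv n x \<in> {v\<in>{1..n}. \<kappa> v = c}" using that rv_in[of n x] by simp
      then show ?thesis by (metis image_eqI rv_rv)
    qed
  next
    fix x assume "x \<in> rv n ` {v\<in>{1..n}. \<kappa> v = c}"
    then obtain y where "x = rv n y" "y \<in> {1..n}" "\<kappa> y = c" by blast
    then show "x \<in> {v\<in>{1..n}. \<kappa> (rv n v) = c}" using rv_in[of n y] by simp
  qed
  then show ?thesis using card_image[OF inj_on_subset[OF inj_rv subset_UNIV]] by simp
qed

lemma rev_chrom:
  assumes "nuio n m" "nuio n m'" "catalan_path n m' = reflect_path (catalan_path n m)"
  shows "chrom_qsym {1..n} (inc_edges n m') \<alpha> =
    (\<Sum>\<kappa>\<in>Kset {1..n} (inc_edges n m) \<alpha>. monom 1 (card (inc_edges n m) - asc (inc_edges n m) \<kappa>))"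
proof -
  define E where "E = inc_edges n m"
  define E2 where "E2 = inc_edges n m'"
  have E2: "E2 = (\<lambda>e. rv n ` e) ` E" unfolding E_def E2_def using E'_eq[OF assms] .
  have pc1: "proper_coloring {1..n} E2 (\<kappa> \<circ> rv n)" if "proper_coloring {1..n} E \<kappa>" for \<kappa>
  proof -
    have "\<forall>e\<in>E2. \<forall>i\<in>e. \<forall>j\<in>e. i \<noteq> j \<longrightarrow> \<kappa> (rv n i) \<noteq> \<kappa> (rv n j)"
    proof (intro ballI impI)
      fix e i j assume "e \<in> E2" "i \<in> e" "j \<in> e" "i \<noteq> j"
      then obtain e0 where "e0 \<in> E" "e = rv n ` e0" using E2 by blast
      then show "\<kappa> (rv n i) \<noteq> \<kappa> (rv n j)" using that \<open>i \<in> e\<close> \<open>j \<in> e\<close> \<open>i \<noteq> j\<close>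
        unfolding proper_coloring_def by (auto, metis)
    qed
    then show ?thesis using that unfolding proper_coloring_def
      using rv_out rv_in by (metis comp_apply)
  qed
  have pc2: "proper_coloring {1..n} E (\<kappa> \<circ> rv n)" if "proper_coloring {1..n} E2 \<kappa>" for \<kappa>
  proof -
    have "\<forall>e\<in>E. \<forall>i\<in>e. \<forall>j\<in>e. i \<noteq> j \<longrightarrow> \<kappa> (rv n i) \<noteq> \<kappa> (rv n j)"
    proof (intro ballI impI)
      fix e i j assume "e \<in> E" "i \<in> e" "j \<in> e" "i \<noteq> j"
      then have "rv n ` e \<in> E2" using E2 by blast
      then show "\<kappa> (rv n i) \<noteq> \<kappa> (rv n j)" using that \<open>i \<in> e\<close> \<open>j \<in> e\<close> \<open>i \<noteq> j\<close>
        unfolding proper_coloring_def by (metis imageI rv_rv)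
    qed
    then show ?thesis using that unfolding proper_coloring_def
      using rv_out rv_in by (metis comp_apply)
  qed
  have ascrv: "asc E2 (\<kappa> \<circ> rv n) = card {e\<in>E. desP \<kappa> e}" for \<kappa>
  proof -
    have "{e\<in>E2. ascP (\<kappa> \<circ> rv n) e} = (\<lambda>e. rv n ` e) ` {e\<in>E. desP \<kappa> e}"
    proof (intro set_eqI iffI)
      fix e assume "e \<in> {e\<in>E2. ascP (\<kappa> \<circ> rv n) e}"
      then obtain e0 where e0: "e0 \<in> E" "e = rv n ` e0" "ascP (\<kappa> \<circ> rv n) e" using E2 by blast
      then obtain i j where ij: "e0 = {i,j}" "A n m i j" using edge_form E_def by blast
      then have "e = {rv n j, rv n i}" "rv n j < rv n i" using e0 unfolding A_def rv_def by auto
      then have "\<kappa> j < \<kappa> i" using e0(3) ascP_dbl by fastforce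
      then have "desP \<kappa> e0" using ij desP_dbl A_def by auto
      then show "e \<in> (\<lambda>e. rv n ` e) ` {e\<in>E. desP \<kappa> e}" using e0 by blast
    next
      fix e assume "e \<in> (\<lambda>e. rv n ` e) ` {e\<in>E. desP \<kappa> e}"
      then obtain e0 where e0: "e0 \<in> E" "e = rv n ` e0" "desP \<kappa> e0" by blast
      then obtain i j where ij: "e0 = {i,j}" "A n m i j" using edge_form E_def by blast
      then have "e = {rv n j, rv n i}" "rv n j < rv n i" using e0 unfolding A_def rv_def by auto
      moreover have "\<kappa> j < \<kappa> i" using e0(3) ij desP_dbl A_def by auto
      ultimately have "ascP (\<kappa> \<circ> rv n) e" using ascP_dbl by fastforce
      then show "e \<in> {e\<in>E2. ascP (\<kappa> \<circ> rv n) e}" using e0 E2 by blast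
    qed
    moreover have "inj_on (\<lambda>e. rv n ` e) {e\<in>E. desP \<kappa> e}"
      by (meson inj_image_eq_iff inj_on_def inj_rv)
    ultimately show ?thesis by (simp add: asc_P card_image)
  qed
  show ?thesis
    unfolding chrom_K E_def[symmetric] E2_def[symmetric]
  proof (rule sym, rule sum.reindex_bij_witness[of _ "\<lambda>\<kappa>. \<kappa> \<circ> rv n" "\<lambda>\<kappa>. \<kappa> \<circ> rv n"])
    fix \<kappa> assume "\<kappa> \<in> Kset {1..n} E2 \<alpha>"
    then show "\<kappa> \<circ> rv n \<circ> rv n = \<kappa>" by auto
    show "\<kappa> \<circ> rv n \<in> Kset {1..n} E \<alpha>" using \<open>\<kappa> \<in> Kset {1..n} E2 \<alpha>\<close> pc2
      unfolding Kset_def using content_rv[of n \<kappa>] by auto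
  next
    fix \<kappa> assume k: "\<kappa> \<in> Kset {1..n} E \<alpha>"
    then show "\<kappa> \<circ> rv n \<circ> rv n = \<kappa>" by auto
    show "\<kappa> \<circ> rv n \<in> Kset {1..n} E2 \<alpha>" using k pc1
      unfolding Kset_def using content_rv[of n \<kappa>] by auto
    have "asc E2 (\<kappa> \<circ> rv n) = card E - asc E \<kappa>"
      using ascrv des_count k unfolding Kset_def E_def by auto
    then show "monom 1 (asc E2 (\<kappa> \<circ> rv n)) = monom 1 (card E - asc E \<kappa>)" by simp
  qed
qed



definition tau :: "nat \<Rightarrow> nat \<Rightarrow> nat" where
  "tau c x = (if x = c then Suc c else if x = Suc c then c else x)"

lemma tau_tau[simp]: "tau c (tau c x) = x" by (auto simp: tau_def)
lemma tau_in: "x = c \<or> x = Suc c \<Longrightarrow> tau c x = c \<or> tau c x = Suc c" by (auto simp: tau_def)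
lemma three: "(a::nat) = c \<or> a = Suc c \<Longrightarrow> b = c \<or> b = Suc c \<Longrightarrow> d = c \<or> d = Suc c \<Longrightarrow>
  a \<noteq> b \<Longrightarrow> b \<noteq> d \<Longrightarrow> a \<noteq> d \<Longrightarrow> False" by auto
lemma alt3: "(a::nat) = c \<or> a = Suc c \<Longrightarrow> b = c \<or> b = Suc c \<Longrightarrow> d = c \<or> d = Suc c \<Longrightarrow>
  b \<noteq> d \<Longrightarrow> (a = b \<longleftrightarrow> even (p + q)) \<Longrightarrow> r = Suc q \<Longrightarrow> (a = d \<longleftrightarrow> even (p + r))" by auto
lemma tau_inj: "tau c x = tau c y \<Longrightarrow> x = y" by (metis tau_tau)

lemma card_pair_inv:
  assumes "finite S" "\<forall>v\<in>S. g v \<in> S" "\<forall>v\<in>S. g (g v) = v" "\<forall>v\<in>S. P (g v) \<longleftrightarrow> \<not> P v"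
  shows "card {v\<in>S. P v} = card {v\<in>S. \<not> P v}"
proof (rule bij_betw_same_card[of g])
  show "bij_betw g {v\<in>S. P v} {v\<in>S. \<not> P v}"
    by (rule bij_betw_byWitness[of _ g]) (use assms in auto)
qed

locale sw =
  fixes n :: nat and m :: "nat \<Rightarrow> nat" and c :: nat
  assumes nu: "nuio n m" and c1: "1 \<le> c"
begin

lemma m_mono: "1 \<le> i \<Longrightarrow> i \<le> j \<Longrightarrow> j < n \<Longrightarrow> m i \<le> m j"
  using nu unfolding nuio_def by blast

lemma L1:
  assumes "A n m y' z'" "y' \<le> y" "y < z" "z \<le> z'"
  shows "A n m y z"
proof -
  have "m y' \<le> m y" using assms m_mono unfolding A_def by auto
  then show ?thesis using assms unfolding A_def by auto
qed

definition cut :: "nat set \<Rightarrow> nat \<Rightarrow> bool" where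
  "cut H x \<longleftrightarrow> \<not> (\<exists>y\<in>H. \<exists>z\<in>H. y \<le> x \<and> x < z \<and> A n m y z)"
definition same :: "nat set \<Rightarrow> nat \<Rightarrow> nat \<Rightarrow> bool" where
  "same H u w \<longleftrightarrow> (\<forall>x. min u w \<le> x \<and> x < max u w \<longrightarrow> \<not> cut H x)"
definition run :: "nat set \<Rightarrow> nat \<Rightarrow> nat set" where
  "run H v = {w\<in>H. same H v w}"
definition Pc :: "nat set \<Rightarrow> nat \<Rightarrow> nat" where
  "Pc H v = card {w\<in>H. w < v}"
definition lo :: "nat set \<Rightarrow> nat \<Rightarrow> nat" where "lo H v = Min (run H v)"
definition hi :: "nat set \<Rightarrow> nat \<Rightarrow> nat" where "hi H v = Max (run H v)"
definition oddr :: "nat set \<Rightarrow> nat \<Rightarrow> bool" where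
  "oddr H v \<longleftrightarrow> even (Pc H (lo H v) + Pc H (hi H v))"
definition nxt :: "nat set \<Rightarrow> nat \<Rightarrow> nat" where "nxt H y = Min {z\<in>H. y < z}"
definition prv :: "nat set \<Rightarrow> nat \<Rightarrow> nat" where "prv H y = Max {z\<in>H. z < y}"
definition pr :: "nat set \<Rightarrow> nat \<Rightarrow> nat" where
  "pr H v = (if even (Pc H v + Pc H (lo H v)) then nxt H v else prv H v)"

lemma same_refl: "same H u u" unfolding same_def by auto
lemma same_sym: "same H u w \<longleftrightarrow> same H w u" unfolding same_def by (simp add: min.commute max.commute)

lemma range_split: "min u w \<le> (x::nat) \<Longrightarrow> x < max u w \<Longrightarrow>
   (min u v \<le> x \<and> x < max u v) \<or> (min v w \<le> x \<and> x < max v w)"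
  by (auto simp: min_def max_def split: if_splits)

lemma same_trans: "same H u v \<Longrightarrow> same H v w \<Longrightarrow> same H u w"
  unfolding same_def using range_split by blast

lemma same_sub: "u \<le> y \<Longrightarrow> y \<le> w \<Longrightarrow> same H u w \<Longrightarrow> same H u y \<and> same H y w"
  unfolding same_def by (simp add: min_def max_def)

lemma K1: "y \<in> H \<Longrightarrow> z \<in> H \<Longrightarrow> A n m y z \<Longrightarrow> same H y z"
  unfolding same_def cut_def A_def by (auto simp: min_def max_def)

lemma finH: "H \<subseteq> {1..n} \<Longrightarrow> finite H"
  using finite_subset by blast

lemma nxt_prop:
  assumes "H \<subseteq> {1..n}" "z \<in> H" "y < z"
  shows "nxt H y \<in> H" "y < nxt H y" "nxt H y \<le> z"
proof -
  have f: "finite {z\<in>H. y < z}" using finH[OF assms(1)] by simp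
  have ne: "z \<in> {z\<in>H. y < z}" using assms by simp
  show "nxt H y \<in> H" "y < nxt H y" using Min_in[OF f] ne unfolding nxt_def by blast+
  show "nxt H y \<le> z" using Min_le[OF f ne] unfolding nxt_def .
qed

lemma prv_prop:
  assumes "H \<subseteq> {1..n}" "u \<in> H" "u < w"
  shows "prv H w \<in> H" "prv H w < w" "u \<le> prv H w"
proof -
  have f: "finite {z\<in>H. z < w}" using finH[OF assms(1)] by simp
  have ne: "u \<in> {z\<in>H. z < w}" using assms by simp
  show "prv H w \<in> H" "prv H w < w" using Max_in[OF f] ne unfolding prv_def by blast+
  show "u \<le> prv H w" using Max_ge[OF f ne] unfolding prv_def .
qed

lemma nxt_prv:
  assumes "H \<subseteq> {1..n}" "u \<in> H" "u < w" "w \<in> H"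
  shows "nxt H (prv H w) = w"
  unfolding nxt_def
proof (rule Min_eqI)
  show "finite {z \<in> H. prv H w < z}" using finH[OF assms(1)] by simp
  show "w \<in> {z \<in> H. prv H w < z}" using prv_prop[OF assms(1-3)] assms(4) by simp
  fix z assume z: "z \<in> {z \<in> H. prv H w < z}"
  show "w \<le> z"
  proof (rule ccontr)
    assume "\<not> w \<le> z"
    then have "z \<le> prv H w" using z prv_prop(3)[OF assms(1), of z w] by simp
    then show False using z by simp
  qed
qed

lemma Pc_nxt:
  assumes "H \<subseteq> {1..n}" "y \<in> H" "z \<in> H" "y < z"
  shows "Pc H (nxt H y) = Suc (Pc H y)"
proof -
  have "{w\<in>H. w < nxt H y} = insert y {w\<in>H. w < y}"
  proof (intro set_eqI iffI)
    fix w assume w: "w \<in> {w\<in>H. w < nxt H y}"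
    have "\<not> y < w" using w nxt_prop(3)[OF assms(1), of w y] by auto
    then show "w \<in> insert y {w\<in>H. w < y}" using w by auto
  next
    fix w assume "w \<in> insert y {w\<in>H. w < y}"
    then show "w \<in> {w\<in>H. w < nxt H y}" using nxt_prop[OF assms(1,3,4)] assms(2) by auto
  qed
  then show ?thesis unfolding Pc_def using finH[OF assms(1)] by simp
qed

lemma Pc_prv:
  assumes "H \<subseteq> {1..n}" "u \<in> H" "u < w" "w \<in> H"
  shows "Pc H w = Suc (Pc H (prv H w))"
  using Pc_nxt[OF assms(1) prv_prop(1)[OF assms(1-3)] assms(4) prv_prop(2)[OF assms(1-3)]]
    nxt_prv[OF assms] by simp

lemma K2:
  assumes "H \<subseteq> {1..n}" "y \<in> H" "z \<in> H" "y < z" "same H y z"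
  shows "A n m y (nxt H y)"
proof -
  have "\<not> cut H y" using assms(4,5) unfolding same_def by simp
  then obtain y' z' where yz: "y' \<in> H" "z' \<in> H" "y' \<le> y" "y < z'" "A n m y' z'"
    unfolding cut_def by blast
  show ?thesis using L1[OF yz(5) yz(3)] nxt_prop[OF assms(1) yz(2,4)] by simp
qed

lemma run_fin: "H \<subseteq> {1..n} \<Longrightarrow> finite (run H v)"
  unfolding run_def using finH by simp
lemma v_run: "v \<in> H \<Longrightarrow> v \<in> run H v"
  unfolding run_def using same_refl by simp
lemma run_eq: "w \<in> run H v \<Longrightarrow> run H w = run H v"
  unfolding run_def using same_trans same_sym by blast

lemma lo_hi:
  assumes "H \<subseteq> {1..n}" "v \<in> H"
  shows "lo H v \<in> run H v" "hi H v \<in> run H v" "\<And>w. w \<in> run H v \<Longrightarrow> lo H v \<le> w \<and> w \<le> hi H v"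
  using Min_in[OF run_fin[OF assms(1)]] Max_in[OF run_fin[OF assms(1)]] v_run[OF assms(2)]
    Min_le[OF run_fin[OF assms(1)]] Max_ge[OF run_fin[OF assms(1)]]
  unfolding lo_def hi_def by blast+

lemma run_inv:
  assumes "w \<in> run H v"
  shows "lo H w = lo H v" "hi H w = hi H v" "oddr H w = oddr H v"
  using run_eq[OF assms] unfolding lo_def hi_def oddr_def by simp_all

lemma run_H: "w \<in> run H v \<Longrightarrow> w \<in> H \<and> same H v w" unfolding run_def by simp


definition Hk :: "(nat \<Rightarrow> nat) \<Rightarrow> nat set" where
  "Hk \<kappa> = {v\<in>{1..n}. \<kappa> v = c \<or> \<kappa> v = Suc c}"

lemma Hk_sub: "Hk \<kappa> \<subseteq> {1..n}" unfolding Hk_def by auto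
lemma Hk_col: "v \<in> Hk \<kappa> \<Longrightarrow> \<kappa> v = c \<or> \<kappa> v = Suc c" unfolding Hk_def by auto

lemma K4:
  assumes pc: "proper_coloring {1..n} (inc_edges n m) \<kappa>"
    and "y \<in> Hk \<kappa>" "z \<in> Hk \<kappa>" "A n m y z"
  shows "nxt (Hk \<kappa>) y = z"
  unfolding nxt_def
proof (rule Min_eqI)
  show "finite {z \<in> Hk \<kappa>. y < z}" using finH[OF Hk_sub] by simp
  show "z \<in> {z \<in> Hk \<kappa>. y < z}" using assms unfolding A_def by simp
  fix x assume x: "x \<in> {z \<in> Hk \<kappa>. y < z}"
  show "z \<le> x"
  proof (rule ccontr)
    assume "\<not> z \<le> x"
    then have "A n m y x" "A n m x z" using L1[OF assms(4)] x by auto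
    then have "\<kappa> y \<noteq> \<kappa> x" "\<kappa> x \<noteq> \<kappa> z" "\<kappa> y \<noteq> \<kappa> z" using proper_A[OF pc] assms(4) by auto
    moreover have "x \<in> Hk \<kappa>" using x by simp
    ultimately show False using three Hk_col[of y \<kappa>] Hk_col[of x \<kappa>] Hk_col[of z \<kappa>] assms(2,3) by metis
  qed
qed

lemma K5:
  assumes pc: "proper_coloring {1..n} (inc_edges n m) \<kappa>" and u: "u \<in> Hk \<kappa>"
  shows "w \<in> Hk \<kappa> \<Longrightarrow> u \<le> w \<Longrightarrow> same (Hk \<kappa>) u w \<Longrightarrow>
      (\<kappa> u = \<kappa> w \<longleftrightarrow> even (Pc (Hk \<kappa>) u + Pc (Hk \<kappa>) w))"
proof (induction w rule: less_induct)
  case (less w)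
  define H where "H = Hk \<kappa>"
  have HV: "H \<subseteq> {1..n}" unfolding H_def by (rule Hk_sub)
  show ?case
  proof (cases "u = w")
    case True then show ?thesis by simp
  next
    case False
    then have uw: "u < w" using less.prems by simp
    define y where "y = prv H w"
    have y: "y \<in> H" "y < w" "u \<le> y" using prv_prop[OF HV, of u w] u uw unfolding y_def H_def by auto
    have s1: "same H u y" "same H y w" using same_sub[OF y(3) less_imp_le[OF y(2)]] less.prems unfolding H_def by auto
    have nx: "nxt H y = w" using nxt_prv[OF HV, of u w] u uw less.prems unfolding y_def H_def by auto
    have "A n m y w" using K2[OF HV y(1) _ y(2) s1(2)] less.prems nx unfolding H_def by auto
    then have d: "\<kappa> y \<noteq> \<kappa> w" using proper_A[OF pc] by blast
    have pw: "Pc H w = Suc (Pc H y)" using Pc_prv[OF HV, of u w] u uw less.prems unfolding y_def H_def by auto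
    have ih: "\<kappa> u = \<kappa> y \<longleftrightarrow> even (Pc H u + Pc H y)" using less.IH[OF y(2)] y s1 unfolding H_def by auto
    have "\<kappa> u = c \<or> \<kappa> u = Suc c" "\<kappa> y = c \<or> \<kappa> y = Suc c" "\<kappa> w = c \<or> \<kappa> w = Suc c"
      using Hk_col u y(1) less.prems unfolding H_def by blast+
    then show ?thesis using alt3 ih d pw unfolding H_def by blast
  qed
qed


lemma pairing:
  assumes pc: "proper_coloring {1..n} (inc_edges n m) \<kappa>" and v: "v \<in> Hk \<kappa>"
    and q: "\<not> (oddr (Hk \<kappa>) v \<and> v = hi (Hk \<kappa>) v)"
  defines "H \<equiv> Hk \<kappa>"
  shows "pr H v \<in> run H v \<and> pr H (pr H v) = v \<and> \<not> (oddr H (pr H v) \<and> pr H v = hi H (pr H v))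
     \<and> \<kappa> (pr H v) \<noteq> \<kappa> v"
proof -
  have HV: "H \<subseteq> {1..n}" unfolding H_def by (rule Hk_sub)
  have vH: "v \<in> H" using v H_def by simp
  define l where "l = lo H v"
  define h where "h = hi H v"
  have lh: "l \<in> run H v" "h \<in> run H v" "l \<le> v" "v \<le> h" using lo_hi[OF HV vH] v_run[OF vH] unfolding l_def h_def by auto
  show ?thesis
  proof (cases "even (Pc H v + Pc H l)")
    case True
    have "v \<noteq> h"
    proof
      assume "v = h"
      then have "oddr H v" using True unfolding oddr_def l_def h_def by (simp add: add.commute)
      then show False using q \<open>v = h\<close> unfolding H_def h_def by simp
    qed
    then have vh: "v < h" using lh by simp
    have hH: "h \<in> H" "same H v h" using run_H[OF lh(2)] by auto
    define z where "z = nxt H v"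
    have z: "z \<in> H" "v < z" "z \<le> h" using nxt_prop[OF HV hH(1) vh] unfolding z_def by auto
    have svz: "same H v z" using same_sub[OF less_imp_le[OF z(2)] z(3) hH(2)] by simp
    have zr: "z \<in> run H v" using z svz unfolding run_def by simp
    have pz: "Pc H z = Suc (Pc H v)" using Pc_nxt[OF HV vH hH(1) vh] unfolding z_def .
    have prv_z: "prv H z = v"
      unfolding prv_def
    proof (rule Max_eqI)
      show "finite {w \<in> H. w < z}" using finH[OF HV] by simp
      show "v \<in> {w \<in> H. w < z}" using vH z by simp
      fix w assume w: "w \<in> {w \<in> H. w < z}"
      show "w \<le> v"
      proof (rule ccontr)
        assume "\<not> w \<le> v"
        then have "z \<le> w" using nxt_prop(3)[OF HV, of w v] w unfolding z_def by auto
        then show False using w by simp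
      qed
    qed
    have lz: "lo H z = l" "hi H z = h" "oddr H z = oddr H v" using run_inv[OF zr] unfolding l_def h_def by auto
    have prz: "pr H z = v" using True pz lz prv_z unfolding pr_def by simp
    have przv: "pr H v = z" using True unfolding pr_def z_def l_def by simp
    have qz: "\<not> (oddr H z \<and> z = hi H z)"
    proof
      assume "oddr H z \<and> z = hi H z"
      then have "even (Pc H l + Pc H z)" using lz unfolding oddr_def by simp
      then show False using True pz by simp
    qed
    have "A n m v z" using K2[OF HV vH hH(1) vh hH(2)] unfolding z_def .
    then have "\<kappa> z \<noteq> \<kappa> v" using proper_A[OF pc, of v z] by auto
    then show ?thesis using zr prz przv qz by simp
  next
    case False
    have "v \<noteq> l" using False by auto
    then have lv: "l < v" using lh by simp
    have lH: "l \<in> H" "same H v l" using run_H[OF lh(1)] by auto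
    define y where "y = prv H v"
    have y: "y \<in> H" "y < v" "l \<le> y" using prv_prop[OF HV lH(1) lv] unfolding y_def by auto
    have sly: "same H y v" using same_sub[OF y(3) less_imp_le[OF y(2)]] lH(2) same_sym by blast
    have yr: "y \<in> run H v" using y sly same_sym unfolding run_def by blast
    have py: "Pc H v = Suc (Pc H y)" using Pc_prv[OF HV lH(1) lv vH] unfolding y_def .
    have nxy: "nxt H y = v" using nxt_prv[OF HV lH(1) lv vH] unfolding y_def .
    have ly: "lo H y = l" "hi H y = h" using run_inv[OF yr] unfolding l_def h_def by auto
    have pry: "pr H y = v" using False py ly nxy unfolding pr_def by simp
    have prvy: "pr H v = y" using False unfolding pr_def y_def l_def by simp
    have qy: "\<not> (oddr H y \<and> y = hi H y)" using ly y lh by auto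
    have "A n m y v" using K2[OF HV y(1) vH y(2) sly] nxy by simp
    then have "\<kappa> y \<noteq> \<kappa> v" using proper_A[OF pc, of y v] by auto
    then show ?thesis using yr pry prvy qy by simp
  qed
qed


definition Phi :: "(nat \<Rightarrow> nat) \<Rightarrow> nat \<Rightarrow> nat" where
  "Phi \<kappa> v = (if v \<in> Hk \<kappa> \<and> oddr (Hk \<kappa>) v then tau c (\<kappa> v) else \<kappa> v)"

lemma Phi_H: "Hk (Phi \<kappa>) = Hk \<kappa>"
proof (intro set_eqI iffI)
  fix v assume "v \<in> Hk (Phi \<kappa>)"
  then show "v \<in> Hk \<kappa>" unfolding Hk_def Phi_def by (auto split: if_splits simp: tau_def)
next
  fix v assume v: "v \<in> Hk \<kappa>"
  then show "v \<in> Hk (Phi \<kappa>)" using tau_in[of "\<kappa> v" c] Hk_col[OF v] unfolding Phi_def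
    using Hk_sub by (auto simp: Hk_def)
qed

lemma Phi_Phi: "Phi (Phi \<kappa>) = \<kappa>"
proof
  fix v show "Phi (Phi \<kappa>) v = \<kappa> v"
    unfolding Phi_def[of "Phi \<kappa>"] Phi_H by (simp add: Phi_def)
qed

lemma Phi_A:
  assumes pc: "proper_coloring {1..n} (inc_edges n m) \<kappa>" and a: "A n m a b"
  shows "Phi \<kappa> a \<noteq> Phi \<kappa> b"
proof -
  define H where "H = Hk \<kappa>"
  have ne: "\<kappa> a \<noteq> \<kappa> b" using proper_A[OF pc a] .
  have V: "a \<in> {1..n}" "b \<in> {1..n}" using a unfolding A_def by auto
  consider "a \<in> H" "b \<in> H" | "a \<in> H" "b \<notin> H" | "a \<notin> H" "b \<in> H" | "a \<notin> H" "b \<notin> H" by blast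
  then show ?thesis
  proof cases
    case 1
    then have "b \<in> run H a" using K1[OF _ _ a] unfolding run_def by blast
    then have "oddr H b = oddr H a" using run_inv by blast
    then show ?thesis using 1 ne tau_inj unfolding Phi_def H_def by auto
  next
    case 2
    then have "Phi \<kappa> a = c \<or> Phi \<kappa> a = Suc c" using Hk_col tau_in unfolding Phi_def H_def by auto
    moreover have "Phi \<kappa> b = \<kappa> b" "\<not> (\<kappa> b = c \<or> \<kappa> b = Suc c)" using 2 V unfolding Phi_def H_def Hk_def by auto
    ultimately show ?thesis by auto
  next
    case 3
    then have "Phi \<kappa> b = c \<or> Phi \<kappa> b = Suc c" using Hk_col tau_in unfolding Phi_def H_def by auto
    moreover have "Phi \<kappa> a = \<kappa> a" "\<not> (\<kappa> a = c \<or> \<kappa> a = Suc c)" using 3 V unfolding Phi_def H_def Hk_def by auto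
    ultimately show ?thesis by auto
  next
    case 4
    then show ?thesis using ne unfolding Phi_def H_def by auto
  qed
qed

lemma Phi_proper:
  assumes pc: "proper_coloring {1..n} (inc_edges n m) \<kappa>"
  shows "proper_coloring {1..n} (inc_edges n m) (Phi \<kappa>)"
proof -
  have 1: "\<forall>v\<in>{1..n}. 1 \<le> Phi \<kappa> v"
  proof
    fix v assume v: "v \<in> {1..n}"
    show "1 \<le> Phi \<kappa> v"
    proof (cases "v \<in> Hk \<kappa> \<and> oddr (Hk \<kappa>) v")
      case True
      then have "tau c (\<kappa> v) = c \<or> tau c (\<kappa> v) = Suc c" using tau_in Hk_col by blast
      then show ?thesis using True c1 unfolding Phi_def by auto
    next
      case False
      then show ?thesis using pc v unfolding Phi_def proper_coloring_def by auto
    qed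
  qed
  have 2: "\<forall>v. v \<notin> {1..n} \<longrightarrow> Phi \<kappa> v = 0"
    using pc Hk_sub[of \<kappa>] unfolding Phi_def proper_coloring_def by auto
  have 3: "\<forall>e\<in>inc_edges n m. \<forall>i\<in>e. \<forall>j\<in>e. i \<noteq> j \<longrightarrow> Phi \<kappa> i \<noteq> Phi \<kappa> j"
  proof (intro ballI impI)
    fix e i j assume e: "e \<in> inc_edges n m" "i \<in> e" "j \<in> e" "i \<noteq> j"
    then obtain a b where ab: "e = {a,b}" "A n m a b" using edge_form by blast
    then show "Phi \<kappa> i \<noteq> Phi \<kappa> j" using e Phi_A[OF pc ab(2)] by auto
  qed
  show ?thesis using 1 2 3 unfolding proper_coloring_def by blast
qed

lemma Phi_content:
  assumes pc: "proper_coloring {1..n} (inc_edges n m) \<kappa>"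
  shows "card {v\<in>{1..n}. Phi \<kappa> v = x} = card {v\<in>{1..n}. \<kappa> v = tau c x}"
proof (cases "x = c \<or> x = Suc c")
  case False
  then have tx: "tau c x = x" by (auto simp: tau_def)
  have "{v\<in>{1..n}. Phi \<kappa> v = x} = {v\<in>{1..n}. \<kappa> v = x}"
  proof (intro Collect_cong conj_cong refl)
    fix v show "(Phi \<kappa> v = x) = (\<kappa> v = x)"
      using False tau_in[of "\<kappa> v" c] Hk_col[of v \<kappa>] unfolding Phi_def by auto
  qed
  then show ?thesis using tx by simp
next
  case True
  define H where "H = Hk \<kappa>"
  have HV: "H \<subseteq> {1..n}" unfolding H_def by (rule Hk_sub)
  define Nn where "Nn = {v\<in>H. \<not> oddr H v}"
  define F where "F = {v\<in>H. oddr H v}"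
  have col: "\<And>v. v \<in> H \<Longrightarrow> \<kappa> v = c \<or> \<kappa> v = Suc c" using Hk_col H_def by blast
  have tx: "\<And>y. y = c \<or> y = Suc c \<Longrightarrow> (y = tau c x \<longleftrightarrow> y \<noteq> x)" using True by (auto simp: tau_def)
  have s1: "{v\<in>{1..n}. Phi \<kappa> v = x} = {v\<in>Nn. \<kappa> v = x} \<union> {v\<in>F. \<kappa> v = tau c x}"
  proof (intro set_eqI iffI)
    fix v assume v: "v \<in> {v\<in>{1..n}. Phi \<kappa> v = x}"
    show "v \<in> {v\<in>Nn. \<kappa> v = x} \<union> {v\<in>F. \<kappa> v = tau c x}"
    proof (cases "v \<in> H")
      case True
      then show ?thesis using v unfolding Nn_def F_def Phi_def H_def by (auto split: if_splits)
    next
      case False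
      then have "\<kappa> v = x" using v unfolding Phi_def H_def by auto
      then show ?thesis using False v True unfolding H_def Hk_def by auto
    qed
  next
    fix v assume "v \<in> {v\<in>Nn. \<kappa> v = x} \<union> {v\<in>F. \<kappa> v = tau c x}"
    then show "v \<in> {v\<in>{1..n}. Phi \<kappa> v = x}" using HV unfolding Nn_def F_def Phi_def H_def by auto
  qed
  have s2: "{v\<in>{1..n}. \<kappa> v = tau c x} = {v\<in>Nn. \<kappa> v = tau c x} \<union> {v\<in>F. \<kappa> v = tau c x}"
  proof -
    have "tau c x = c \<or> tau c x = Suc c" using tau_in True by blast
    then show ?thesis using HV unfolding Nn_def F_def H_def Hk_def by auto
  qed
  have fin: "finite Nn" "finite F" using finH[OF HV] unfolding Nn_def F_def by auto
  have pair: "card {v\<in>Nn. \<kappa> v = x} = card {v\<in>Nn. \<not> \<kappa> v = x}"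
  proof (rule card_pair_inv[OF fin(1), of "pr H"])
    show "\<forall>v\<in>Nn. pr H v \<in> Nn"
    proof
      fix v assume v: "v \<in> Nn"
      then have "v \<in> Hk \<kappa>" "\<not> (oddr (Hk \<kappa>) v \<and> v = hi (Hk \<kappa>) v)" unfolding Nn_def H_def by auto
      from pairing[OF pc this] have "pr H v \<in> run H v" unfolding H_def by blast
      then show "pr H v \<in> Nn" using run_inv[of "pr H v" H v] run_H v unfolding Nn_def by blast
    qed
    show "\<forall>v\<in>Nn. pr H (pr H v) = v"
    proof
      fix v assume v: "v \<in> Nn"
      then have "v \<in> Hk \<kappa>" "\<not> (oddr (Hk \<kappa>) v \<and> v = hi (Hk \<kappa>) v)" unfolding Nn_def H_def by auto
      from pairing[OF pc this] show "pr H (pr H v) = v" unfolding H_def by blast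
    qed
    show "\<forall>v\<in>Nn. (\<kappa> (pr H v) = x) = (\<not> \<kappa> v = x)"
    proof
      fix v assume v: "v \<in> Nn"
      then have "v \<in> Hk \<kappa>" "\<not> (oddr (Hk \<kappa>) v \<and> v = hi (Hk \<kappa>) v)" unfolding Nn_def H_def by auto
      from pairing[OF pc this] have "pr H v \<in> run H v" "\<kappa> (pr H v) \<noteq> \<kappa> v" unfolding H_def by blast+
      then show "(\<kappa> (pr H v) = x) = (\<not> \<kappa> v = x)" using col[of v] col[of "pr H v"] run_H v True
        unfolding Nn_def by auto
    qed
  qed
  have "{v\<in>Nn. \<not> \<kappa> v = x} = {v\<in>Nn. \<kappa> v = tau c x}" using tx col unfolding Nn_def by auto
  then have pair2: "card {v\<in>Nn. \<kappa> v = x} = card {v\<in>Nn. \<kappa> v = tau c x}" using pair by simp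
  have d: "Nn \<inter> F = {}" unfolding Nn_def F_def by auto
  have "card {v\<in>{1..n}. Phi \<kappa> v = x} = card {v\<in>Nn. \<kappa> v = x} + card {v\<in>F. \<kappa> v = tau c x}"
    unfolding s1 by (rule card_Un_disjoint) (use fin d in auto)
  moreover have "card {v\<in>{1..n}. \<kappa> v = tau c x} = card {v\<in>Nn. \<kappa> v = tau c x} + card {v\<in>F. \<kappa> v = tau c x}"
    unfolding s2 by (rule card_Un_disjoint) (use fin d in auto)
  ultimately show ?thesis using pair2 by simp
qed


lemma ascH:
  assumes pc: "proper_coloring {1..n} (inc_edges n m) \<kappa>"
  defines "H \<equiv> Hk \<kappa>"
  shows "card {e\<in>inc_edges n m. e \<subseteq> H \<and> ascP \<kappa> e} = card {y\<in>H. y \<noteq> hi H y \<and> \<kappa> y = c}"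
proof -
  have HV: "H \<subseteq> {1..n}" unfolding H_def by (rule Hk_sub)
  have col: "\<And>v. v \<in> H \<Longrightarrow> \<kappa> v = c \<or> \<kappa> v = Suc c" using Hk_col H_def by blast
  have eq: "{e\<in>inc_edges n m. e \<subseteq> H \<and> ascP \<kappa> e} = (\<lambda>y. {y, nxt H y}) ` {y\<in>H. y \<noteq> hi H y \<and> \<kappa> y = c}"
  proof (intro set_eqI iffI)
    fix e assume e: "e \<in> {e\<in>inc_edges n m. e \<subseteq> H \<and> ascP \<kappa> e}"
    then obtain i j where ij: "e = {i,j}" "A n m i j" using edge_form by blast
    have ijH: "i \<in> H" "j \<in> H" using e ij by auto
    have lt: "i < j" using ij unfolding A_def by simp
    have "\<kappa> i < \<kappa> j" using e ij ascP_dbl[OF lt] by auto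
    then have ki: "\<kappa> i = c" using col[OF ijH(1)] col[OF ijH(2)] by auto
    have nx: "nxt H i = j" using K4[OF pc _ _ ij(2)] ijH unfolding H_def by simp
    have "j \<in> run H i" using K1[OF ijH ij(2)] ijH unfolding run_def by simp
    then have "j \<le> hi H i" using lo_hi(3)[OF HV ijH(1)] by blast
    then have "i \<noteq> hi H i" using lt by auto
    then show "e \<in> (\<lambda>y. {y, nxt H y}) ` {y\<in>H. y \<noteq> hi H y \<and> \<kappa> y = c}"
      using ij nx ki ijH by auto
  next
    fix e assume "e \<in> (\<lambda>y. {y, nxt H y}) ` {y\<in>H. y \<noteq> hi H y \<and> \<kappa> y = c}"
    then obtain y where y: "e = {y, nxt H y}" "y \<in> H" "y \<noteq> hi H y" "\<kappa> y = c" by blast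
    define h where "h = hi H y"
    have hr: "h \<in> run H y" "y \<le> h" using lo_hi[OF HV y(2)] v_run[OF y(2)] unfolding h_def by auto
    have yh: "y < h" using hr y(3) unfolding h_def by simp
    have hH: "h \<in> H" "same H y h" using run_H[OF hr(1)] by auto
    have a: "A n m y (nxt H y)" using K2[OF HV y(2) hH(1) yh hH(2)] .
    have zH: "nxt H y \<in> H" "y < nxt H y" using nxt_prop[OF HV hH(1) yh] by auto
    have "\<kappa> (nxt H y) \<noteq> \<kappa> y" using proper_A[OF pc a] by simp
    then have "\<kappa> (nxt H y) = Suc c" using col[OF zH(1)] y(4) by auto
    then have "ascP \<kappa> e" using y ascP_dbl[OF zH(2)] by simp
    then show "e \<in> {e\<in>inc_edges n m. e \<subseteq> H \<and> ascP \<kappa> e}" using A_edge[OF a] y zH by auto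
  qed
  have inj: "inj_on (\<lambda>y. {y, nxt H y}) {y\<in>H. y \<noteq> hi H y \<and> \<kappa> y = c}"
  proof (rule inj_onI)
    fix y y' assume y: "y \<in> {y\<in>H. y \<noteq> hi H y \<and> \<kappa> y = c}" and y': "y' \<in> {y\<in>H. y \<noteq> hi H y \<and> \<kappa> y = c}"
      and eq: "{y, nxt H y} = {y', nxt H y'}"
    have "y < nxt H y" if "y \<in> H" "y \<noteq> hi H y" for y
    proof -
      have hr: "hi H y \<in> run H y" "y \<le> hi H y" using lo_hi[OF HV that(1)] v_run[OF that(1)] by auto
      then show ?thesis using nxt_prop(2)[OF HV, of "hi H y" y] run_H[OF hr(1)] that by auto
    qed
    then have "y < nxt H y" "y' < nxt H y'" using y y' by auto
    then show "y = y'" using eq by (auto simp: doubleton_eq_iff)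
  qed
  show ?thesis unfolding eq using card_image[OF inj] .
qed

lemma asc_split: "asc (inc_edges n m) \<kappa> = card {e\<in>inc_edges n m. e \<subseteq> H \<and> ascP \<kappa> e}
   + card {e\<in>inc_edges n m. \<not> e \<subseteq> H \<and> ascP \<kappa> e}"
proof -
  define X where "X = {e\<in>inc_edges n m. e \<subseteq> H \<and> ascP \<kappa> e}"
  define Y where "Y = {e\<in>inc_edges n m. \<not> e \<subseteq> H \<and> ascP \<kappa> e}"
  have u: "{e\<in>inc_edges n m. ascP \<kappa> e} = X \<union> Y" unfolding X_def Y_def by blast
  have "card (X \<union> Y) = card X + card Y"
    by (rule card_Un_disjoint) (auto simp: X_def Y_def finite_E)
  then show ?thesis unfolding asc_P u X_def Y_def .
qed

lemma outside:
  assumes pc: "proper_coloring {1..n} (inc_edges n m) \<kappa>"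
  shows "{e\<in>inc_edges n m. \<not> e \<subseteq> Hk \<kappa> \<and> ascP (Phi \<kappa>) e} = {e\<in>inc_edges n m. \<not> e \<subseteq> Hk \<kappa> \<and> ascP \<kappa> e}"
proof (intro Collect_cong conj_cong refl)
  fix e assume e: "e \<in> inc_edges n m" "\<not> e \<subseteq> Hk \<kappa>"
  then obtain i j where ij: "e = {i,j}" "A n m i j" using edge_form by blast
  have lt: "i < j" and V: "i \<in> {1..n}" "j \<in> {1..n}" using ij unfolding A_def by auto
  have o: "\<And>v. v \<in> {1..n} \<Longrightarrow> v \<notin> Hk \<kappa> \<Longrightarrow> Phi \<kappa> v = \<kappa> v \<and> \<not> (\<kappa> v = c \<or> \<kappa> v = Suc c)"
    unfolding Phi_def Hk_def by auto
  have i: "\<And>v. v \<in> Hk \<kappa> \<Longrightarrow> (Phi \<kappa> v = c \<or> Phi \<kappa> v = Suc c) \<and> (\<kappa> v = c \<or> \<kappa> v = Suc c)"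
    using Hk_col tau_in unfolding Phi_def by auto
  have "(Phi \<kappa> i < Phi \<kappa> j) = (\<kappa> i < \<kappa> j)"
  proof (cases "i \<in> Hk \<kappa>")
    case True
    then have "j \<notin> Hk \<kappa>" using e ij by auto
    then show ?thesis using o[OF V(2)] i[OF True] by auto
  next
    case False
    show ?thesis
    proof (cases "j \<in> Hk \<kappa>")
      case True
      then show ?thesis using o[OF V(1) False] i[OF True] by auto
    next
      case False
      then show ?thesis using o[OF V(1) \<open>i \<notin> Hk \<kappa>\<close>] o[OF V(2) False] by auto
    qed
  qed
  then show "ascP (Phi \<kappa>) e = ascP \<kappa> e" using ij ascP_dbl[OF lt] by simp
qed

lemma Dcount:
  assumes pc: "proper_coloring {1..n} (inc_edges n m) \<kappa>"
  defines "H \<equiv> Hk \<kappa>"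
  shows "card {y\<in>H. y \<noteq> hi H y \<and> Phi \<kappa> y = c} = card {y\<in>H. y \<noteq> hi H y \<and> \<kappa> y = c}"
proof -
  have HV: "H \<subseteq> {1..n}" unfolding H_def by (rule Hk_sub)
  have col: "\<And>v. v \<in> H \<Longrightarrow> \<kappa> v = c \<or> \<kappa> v = Suc c" using Hk_col H_def by blast
  define D0 where "D0 = {y\<in>H. y \<noteq> hi H y \<and> \<not> oddr H y}"
  define D1 where "D1 = {y\<in>H. y \<noteq> hi H y \<and> oddr H y}"
  have fin: "finite D0" "finite D1" using finH[OF HV] unfolding D0_def D1_def by auto
  have s1: "{y\<in>H. y \<noteq> hi H y \<and> Phi \<kappa> y = c} = {y\<in>D0. \<kappa> y = c} \<union> {y\<in>D1. \<kappa> y = Suc c}"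
    using col unfolding D0_def D1_def Phi_def H_def by (auto simp: tau_def)
  have s2: "{y\<in>H. y \<noteq> hi H y \<and> \<kappa> y = c} = {y\<in>D0. \<kappa> y = c} \<union> {y\<in>D1. \<kappa> y = c}"
    unfolding D0_def D1_def by auto
  have d: "D0 \<inter> D1 = {}" unfolding D0_def D1_def by auto
  have pr1: "pr H v \<in> run H v \<and> pr H (pr H v) = v \<and> \<not> (oddr H (pr H v) \<and> pr H v = hi H (pr H v))
     \<and> \<kappa> (pr H v) \<noteq> \<kappa> v" if "v \<in> D1" for v
    using pairing[OF pc, of v] that unfolding D1_def H_def by auto
  have pair: "card {v\<in>D1. \<kappa> v = c} = card {v\<in>D1. \<not> \<kappa> v = c}"
  proof (rule card_pair_inv[OF fin(2), of "pr H"])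
    show "\<forall>v\<in>D1. pr H v \<in> D1"
    proof
      fix v assume v: "v \<in> D1"
      have r: "pr H v \<in> run H v" using pr1[OF v] by blast
      have "oddr H (pr H v)" using run_inv(3)[OF r] v unfolding D1_def by simp
      then show "pr H v \<in> D1" using pr1[OF v] run_H[OF r] unfolding D1_def by auto
    qed
    show "\<forall>v\<in>D1. pr H (pr H v) = v" using pr1 by blast
    show "\<forall>v\<in>D1. (\<kappa> (pr H v) = c) = (\<not> \<kappa> v = c)"
    proof
      fix v assume v: "v \<in> D1"
      have r: "pr H v \<in> run H v" "\<kappa> (pr H v) \<noteq> \<kappa> v" using pr1[OF v] by blast+
      then show "(\<kappa> (pr H v) = c) = (\<not> \<kappa> v = c)" using col[of v] col[of "pr H v"] run_H[OF r(1)] v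
        unfolding D1_def by auto
    qed
  qed
  have "{v\<in>D1. \<not> \<kappa> v = c} = {v\<in>D1. \<kappa> v = Suc c}" using col unfolding D1_def by auto
  then have pair2: "card {v\<in>D1. \<kappa> v = c} = card {v\<in>D1. \<kappa> v = Suc c}" using pair by simp
  have "card {y\<in>H. y \<noteq> hi H y \<and> Phi \<kappa> y = c} = card {y\<in>D0. \<kappa> y = c} + card {y\<in>D1. \<kappa> y = Suc c}"
    unfolding s1 by (rule card_Un_disjoint) (use fin d in auto)
  moreover have "card {y\<in>H. y \<noteq> hi H y \<and> \<kappa> y = c} = card {y\<in>D0. \<kappa> y = c} + card {y\<in>D1. \<kappa> y = c}"
    unfolding s2 by (rule card_Un_disjoint) (use fin d in auto)
  ultimately show ?thesis using pair2 by simp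
qed

lemma asc_Phi:
  assumes pc: "proper_coloring {1..n} (inc_edges n m) \<kappa>"
  shows "asc (inc_edges n m) (Phi \<kappa>) = asc (inc_edges n m) \<kappa>"
proof -
  have pc2: "proper_coloring {1..n} (inc_edges n m) (Phi \<kappa>)" by (rule Phi_proper[OF pc])
  have "asc (inc_edges n m) (Phi \<kappa>) = card {e\<in>inc_edges n m. e \<subseteq> Hk \<kappa> \<and> ascP (Phi \<kappa>) e}
     + card {e\<in>inc_edges n m. \<not> e \<subseteq> Hk \<kappa> \<and> ascP (Phi \<kappa>) e}" by (rule asc_split)
  also have "card {e\<in>inc_edges n m. e \<subseteq> Hk \<kappa> \<and> ascP (Phi \<kappa>) e} = card {y\<in>Hk \<kappa>. y \<noteq> hi (Hk \<kappa>) y \<and> Phi \<kappa> y = c}"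
    using ascH[OF pc2] unfolding Phi_H .
  also have "\<dots> = card {y\<in>Hk \<kappa>. y \<noteq> hi (Hk \<kappa>) y \<and> \<kappa> y = c}" by (rule Dcount[OF pc])
  also have "\<dots> = card {e\<in>inc_edges n m. e \<subseteq> Hk \<kappa> \<and> ascP \<kappa> e}" using ascH[OF pc] by simp
  also have "card {e\<in>inc_edges n m. \<not> e \<subseteq> Hk \<kappa> \<and> ascP (Phi \<kappa>) e} = card {e\<in>inc_edges n m. \<not> e \<subseteq> Hk \<kappa> \<and> ascP \<kappa> e}"
    using outside[OF pc] by simp
  also have "card {e\<in>inc_edges n m. e \<subseteq> Hk \<kappa> \<and> ascP \<kappa> e} + \<dots> = asc (inc_edges n m) \<kappa>"
    by (rule asc_split[symmetric])
  finally show ?thesis .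
qed

lemma core_loc:
  "chrom_qsym {1..n} (inc_edges n m) (\<alpha> \<circ> tau c) = chrom_qsym {1..n} (inc_edges n m) \<alpha>"
  unfolding chrom_K
proof (rule sum.reindex_bij_witness[of _ Phi Phi])
  fix \<kappa> assume k: "\<kappa> \<in> Kset {1..n} (inc_edges n m) (\<alpha> \<circ> tau c)"
  then have pc: "proper_coloring {1..n} (inc_edges n m) \<kappa>" unfolding Kset_def by blast
  show "Phi (Phi \<kappa>) = \<kappa>" by (rule Phi_Phi)
  have ct: "card {v\<in>{1..n}. \<kappa> v = x} = \<alpha> (tau c x)" for x using k unfolding Kset_def by auto
  show "Phi \<kappa> \<in> Kset {1..n} (inc_edges n m) \<alpha>"
    unfolding Kset_def
  proof (intro CollectI conjI allI)
    show "proper_coloring {1..n} (inc_edges n m) (Phi \<kappa>)" by (rule Phi_proper[OF pc])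
    fix x show "card {v\<in>{1..n}. Phi \<kappa> v = x} = \<alpha> x" using Phi_content[OF pc, of x] ct[of "tau c x"] by simp
  qed
  show "monom 1 (asc (inc_edges n m) (Phi \<kappa>)) = monom 1 (asc (inc_edges n m) \<kappa>)"
    using asc_Phi[OF pc] by simp
next
  fix \<kappa> assume k: "\<kappa> \<in> Kset {1..n} (inc_edges n m) \<alpha>"
  then have pc: "proper_coloring {1..n} (inc_edges n m) \<kappa>" unfolding Kset_def by blast
  show "Phi (Phi \<kappa>) = \<kappa>" by (rule Phi_Phi)
  have ct: "card {v\<in>{1..n}. \<kappa> v = x} = \<alpha> x" for x using k unfolding Kset_def by auto
  show "Phi \<kappa> \<in> Kset {1..n} (inc_edges n m) (\<alpha> \<circ> tau c)"
    unfolding Kset_def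
  proof (intro CollectI conjI allI)
    show "proper_coloring {1..n} (inc_edges n m) (Phi \<kappa>)" by (rule Phi_proper[OF pc])
    fix x show "card {v\<in>{1..n}. Phi \<kappa> v = x} = (\<alpha> \<circ> tau c) x" using Phi_content[OF pc, of x] ct[of "tau c x"] by simp
  qed
qed

end

lemma core:
  assumes "nuio n m" "1 \<le> c"
  shows "chrom_qsym {1..n} (inc_edges n m) (\<alpha> \<circ> tau c) = chrom_qsym {1..n} (inc_edges n m) \<alpha>"
proof -
  interpret sw n m c using assms by unfold_locales
  show ?thesis by (rule core_loc)
qed



definition sigma :: "nat \<Rightarrow> nat \<Rightarrow> nat" where
  "sigma N d = (if 1 \<le> d \<and> d \<le> N then d + 1 else if d = N + 1 then 1 else d)"
definition rho :: "nat \<Rightarrow> nat \<Rightarrow> nat" where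
  "rho N x = (if 1 \<le> x \<and> x \<le> N then N + 1 - x else x)"

lemma sigma_0: "sigma 0 = id" by (auto simp: sigma_def)
lemma sigma_Suc: "sigma (Suc N) = sigma N \<circ> tau (Suc N)"
proof
  fix d show "sigma (Suc N) d = (sigma N \<circ> tau (Suc N)) d"
    by (cases "d = Suc N"; cases "d = Suc (Suc N)"; simp add: sigma_def tau_def)
qed
lemma rho_0: "rho 0 = id" by (auto simp: rho_def)
lemma rho_Suc: "rho (Suc N) = sigma N \<circ> rho N"
proof
  fix d show "rho (Suc N) d = (sigma N \<circ> rho N) d"
    by (auto simp: sigma_def rho_def split: if_splits)
qed

lemma rho_rho[simp]: "rho N (rho N x) = x" by (auto simp: rho_def)
lemma rho_inj: "rho N x = rho N y \<Longrightarrow> x = y" by (metis rho_rho)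

lemma inv_sigma:
  assumes "nuio n m"
  shows "chrom_qsym {1..n} (inc_edges n m) (\<alpha> \<circ> sigma N) = chrom_qsym {1..n} (inc_edges n m) \<alpha>"
proof (induction N arbitrary: \<alpha>)
  case 0 then show ?case by (simp add: sigma_0)
next
  case (Suc N)
  have e: "\<alpha> \<circ> sigma (Suc N) = (\<alpha> \<circ> sigma N) \<circ> tau (Suc N)" by (simp add: sigma_Suc comp_assoc)
  have h: "chrom_qsym {1..n} (inc_edges n m) ((\<alpha> \<circ> sigma N) \<circ> tau (Suc N)) = chrom_qsym {1..n} (inc_edges n m) (\<alpha> \<circ> sigma N)"
    by (rule core[OF assms]) simp
  show ?case unfolding e by (rule trans[OF h Suc.IH])
qed

lemma inv_rho:
  assumes "nuio n m"
  shows "chrom_qsym {1..n} (inc_edges n m) (\<alpha> \<circ> rho N) = chrom_qsym {1..n} (inc_edges n m) \<alpha>"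
proof (induction N arbitrary: \<alpha>)
  case 0 then show ?case by (simp add: rho_0)
next
  case (Suc N)
  have e: "\<alpha> \<circ> rho (Suc N) = (\<alpha> \<circ> sigma N) \<circ> rho N" by (simp add: rho_Suc comp_assoc)
  show ?case unfolding e by (rule trans[OF Suc.IH[of "\<alpha> \<circ> sigma N"] inv_sigma[OF assms, of "\<alpha>" N]])
qed

lemma K_bound:
  assumes "\<kappa> \<in> Kset {1..n} E \<beta>" "\<forall>x>N. \<beta> x = 0" "v \<in> {1..n}"
  shows "\<kappa> v \<le> N"
proof (rule ccontr)
  assume "\<not> \<kappa> v \<le> N"
  then have "\<beta> (\<kappa> v) = 0" using assms(2) by simp
  moreover have "card {w\<in>{1..n}. \<kappa> w = \<kappa> v} = \<beta> (\<kappa> v)" using assms(1) unfolding Kset_def by blast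
  moreover have "card {w\<in>{1..n}. \<kappa> w = \<kappa> v} > 0" using assms(3) by (auto simp: card_gt_0_iff)
  ultimately show False by simp
qed

lemma colrev:
  assumes "nuio n m" "\<forall>x>N. \<alpha> x = 0"
  shows "(\<Sum>\<kappa>\<in>Kset {1..n} (inc_edges n m) \<alpha>. monom 1 (card (inc_edges n m) - asc (inc_edges n m) \<kappa>))
     = chrom_qsym {1..n} (inc_edges n m) (\<alpha> \<circ> rho N)"
proof -
  define E where "E = inc_edges n m"
  define V :: "nat set" where "V = {1..n}"
  have b2: "\<forall>x>N. (\<alpha> \<circ> rho N) x = 0" using assms(2) by (auto simp: rho_def)
  have cont: "card {v\<in>V. rho N (\<kappa> v) = c} = card {v\<in>V. \<kappa> v = rho N c}" for \<kappa> c
  proof -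
    have "{v\<in>V. rho N (\<kappa> v) = c} = {v\<in>V. \<kappa> v = rho N c}"
      by (intro Collect_cong conj_cong refl) (metis rho_rho)
    then show ?thesis by simp
  qed
  have pc: "proper_coloring V E (rho N \<circ> \<kappa>)" if "proper_coloring V E \<kappa>" "\<forall>v\<in>V. \<kappa> v \<le> N" for \<kappa>
  proof -
    have "\<forall>v\<in>V. 1 \<le> rho N (\<kappa> v)" using that unfolding proper_coloring_def by (auto simp: rho_def)
    moreover have "\<forall>v. v \<notin> V \<longrightarrow> rho N (\<kappa> v) = 0" using that unfolding proper_coloring_def by (auto simp: rho_def)
    moreover have "\<forall>e\<in>E. \<forall>i\<in>e. \<forall>j\<in>e. i \<noteq> j \<longrightarrow> rho N (\<kappa> i) \<noteq> rho N (\<kappa> j)"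
      using that(1) rho_inj unfolding proper_coloring_def by blast
    ultimately show ?thesis unfolding proper_coloring_def by simp
  qed
  have ascr: "asc E (rho N \<circ> \<kappa>) = card E - asc E \<kappa>" if "proper_coloring V E \<kappa>" "\<forall>v\<in>V. \<kappa> v \<le> N" for \<kappa>
  proof -
    have "{e\<in>E. ascP (rho N \<circ> \<kappa>) e} = {e\<in>E. desP \<kappa> e}"
    proof (intro Collect_cong conj_cong refl)
      fix e assume "e \<in> E"
      then obtain i j where ij: "e = {i,j}" "A n m i j" using edge_form E_def by blast
      then have "i \<in> V" "j \<in> V" unfolding A_def V_def by auto
      then have "1 \<le> \<kappa> i" "1 \<le> \<kappa> j" "\<kappa> i \<le> N" "\<kappa> j \<le> N" using that unfolding proper_coloring_def by auto
      then have "rho N (\<kappa> i) < rho N (\<kappa> j) \<longleftrightarrow> \<kappa> j < \<kappa> i" by (auto simp: rho_def)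
      then show "ascP (rho N \<circ> \<kappa>) e = desP \<kappa> e" using ij ascP_dbl desP_dbl A_def by auto
    qed
    then show ?thesis using des_count[of V n m \<kappa>] that by (simp add: asc_P E_def)
  qed
  show ?thesis unfolding chrom_K E_def[symmetric] V_def[symmetric]
  proof (rule sum.reindex_bij_witness[of _ "\<lambda>\<kappa>. rho N \<circ> \<kappa>" "\<lambda>\<kappa>. rho N \<circ> \<kappa>"])
    fix \<kappa> assume k: "\<kappa> \<in> Kset V E \<alpha>"
    have bd: "\<forall>v\<in>V. \<kappa> v \<le> N" using K_bound k assms(2) V_def by blast
    show "rho N \<circ> (rho N \<circ> \<kappa>) = \<kappa>" by (auto simp: fun_eq_iff)
    show "rho N \<circ> \<kappa> \<in> Kset V E (\<alpha> \<circ> rho N)" using k pc[OF _ bd] cont[of \<kappa>] unfolding Kset_def by auto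
    show "monom 1 (asc E (rho N \<circ> \<kappa>)) = monom 1 (card E - asc E \<kappa>)"
      using ascr[OF _ bd] k unfolding Kset_def by auto
  next
    fix \<kappa> assume k: "\<kappa> \<in> Kset V E (\<alpha> \<circ> rho N)"
    have bd: "\<forall>v\<in>V. \<kappa> v \<le> N" using K_bound k b2 V_def by blast
    show "rho N \<circ> (rho N \<circ> \<kappa>) = \<kappa>" by (auto simp: fun_eq_iff)
    show "rho N \<circ> \<kappa> \<in> Kset V E \<alpha>" using k pc[OF _ bd] cont[of \<kappa>] unfolding Kset_def by auto
  qed
qed

theorem lemma2p17:
  fixes n :: nat and m m' :: "nat \<Rightarrow> nat"
  assumes "nuio n m" and "nuio n m'"
    and "catalan_path n m' = reflect_path (catalan_path n m)"
  shows "chrom_qsym (inc_vertices n) (inc_edges n m) =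
         chrom_qsym (inc_vertices n) (inc_edges n m')"
proof (rule ext)
  fix \<alpha>
  show "chrom_qsym (inc_vertices n) (inc_edges n m) \<alpha> = chrom_qsym (inc_vertices n) (inc_edges n m') \<alpha>"
  proof (cases "Kset {1..n} (inc_edges n m) \<alpha> = {}")
    case True
    then show ?thesis using rev_chrom[OF assms, of \<alpha>] chrom_K[of "{1..n}" "inc_edges n m" \<alpha>]
      unfolding inc_vertices_def by simp
  next
    case False
    then obtain \<kappa>0 where k0: "\<kappa>0 \<in> Kset {1..n} (inc_edges n m) \<alpha>" by blast
    define N where "N = Max (insert 0 (\<kappa>0 ` {1..n}))"
    have "\<forall>x>N. \<alpha> x = 0"
    proof (intro allI impI)
      fix x assume "N < x"
      have "\<forall>v\<in>{1..n}. \<kappa>0 v \<le> N" unfolding N_def by simp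
      then have "{v\<in>{1..n}. \<kappa>0 v = x} = {}" using \<open>N < x\<close> by force
      then show "\<alpha> x = 0" using k0 unfolding Kset_def by (metis (mono_tags, lifting) card.empty mem_Collect_eq)
    qed
    then show ?thesis unfolding inc_vertices_def rev_chrom[OF assms]
      using colrev[OF assms(1)] inv_rho[OF assms(1)] by simp
  qed
qed

end
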